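(* Let $N\ge 1$, let $x_1,\dots,x_{2N-2}\in\mathbb{C}$ and let $z_1,\dots,z_N\in\mathbb{C}$ be pairwise distinct and distinct from all $x_i$. Then $$\sum_{r=1}^N\Big(\prod_{i=1}^{2N-2}(z_r-x_i)\Big)\Big(\prod_{s=1,\,s\ne r}^N\frac{1}{(z_r-z_s)^2}\Big)\Big[\sum_{i=1}^{2N-2}\frac{1}{z_r-x_i}-\sum_{s=1,\,s\ne r}^N\frac{2}{z_r-z_s}\Big]=0 .$$ *)

theory Defs
  imports Complex_Main
begin

end

theory Submission
  imports Defs "HOL-Complex_Analysis.Complex_Analysis"
begin

lemma DERIV_prod_log:
  fixes h :: "nat \<Rightarrow> complex \<Rightarrow> complex"
  assumes "finite A"
    and "\<And>i. i \<in> A \<Longrightarrow> (h i has_field_derivative h' i) (at a)"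
    and "\<And>i. i \<in> A \<Longrightarrow> h i a \<noteq> 0"
  shows "((\<lambda>w. \<Prod>i\<in>A. h i w) has_field_derivative (\<Prod>i\<in>A. h i a) * (\<Sum>i\<in>A. h' i / h i a)) (at a)"
  using assms
proof (induction A rule: finite_induct)
  case empty
  then show ?case by simp
next
  case (insert j F)
  have d1: "(h j has_field_derivative h' j) (at a)" using insert by auto
  have d2: "((\<lambda>w. \<Prod>i\<in>F. h i w) has_field_derivative (\<Prod>i\<in>F. h i a) * (\<Sum>i\<in>F. h' i / h i a)) (at a)"
    using insert by auto
  have nz: "h j a \<noteq> 0" using insert by auto
  have "((\<lambda>w. h j w * (\<Prod>i\<in>F. h i w)) has_field_derivative
      h' j * (\<Prod>i\<in>F. h i a) + h j a * ((\<Prod>i\<in>F. h i a) * (\<Sum>i\<in>F. h' i / h i a))) (at a)"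
    using DERIV_mult[OF d1 d2] by (simp add: algebra_simps)
  moreover have "h' j * (\<Prod>i\<in>F. h i a) + h j a * ((\<Prod>i\<in>F. h i a) * (\<Sum>i\<in>F. h' i / h i a))
     = (\<Prod>i\<in>insert j F. h i a) * (\<Sum>i\<in>insert j F. h' i / h i a)"
    using insert nz by (simp add: field_simps)
  ultimately show ?case using insert by simp
qed

lemma inv_sq_deriv:
  fixes c a :: complex
  assumes "a \<noteq> c"
  shows "((\<lambda>w. 1 / (w - c)^2) has_field_derivative (1 / (a - c)^2) * (- 2 / (a - c))) (at a)"
proof -
  have "((\<lambda>w. 1 / (w - c)^2) has_field_derivative - (2 * (a - c)) / ((a - c)^2)^2) (at a)"
    using assms by (auto intro!: derivative_eq_intros)
  moreover have "- (2 * (a - c)) / ((a - c)^2)^2 = (1 / (a - c)^2) * (- 2 / (a - c))"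
  proof -
    have gen: "\<And>d::complex. d \<noteq> 0 \<Longrightarrow> - (2 * d) / (d^2)^2 = (1 / d^2) * (- 2 / d)"
      by (simp add: field_simps power2_eq_square)
    show ?thesis using gen[of "a - c"] assms by simp
  qed
  ultimately show ?thesis by simp
qed


lemma residue_term:
  fixes x z :: "nat \<Rightarrow> complex" and I J :: "nat set"
  assumes I: "finite I" and J: "finite J" and r: "r \<in> J"
    and zz: "\<And>s. s \<in> J \<Longrightarrow> s \<noteq> r \<Longrightarrow> z s \<noteq> z r"
    and zx: "\<And>i. i \<in> I \<Longrightarrow> z r \<noteq> x i"
  shows "residue (\<lambda>w. (\<Prod>i\<in>I. w - x i) * (\<Prod>s\<in>J. 1/(w - z s)^2)) (z r)
    = (\<Prod>i\<in>I. z r - x i) * (\<Prod>s\<in>J-{r}. 1/(z r - z s)^2)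
      * ((\<Sum>i\<in>I. 1/(z r - x i)) - (\<Sum>s\<in>J-{r}. 2/(z r - z s)))"
proof -
  define g where "g = (\<lambda>w. (\<Prod>i\<in>I. w - x i) * (\<Prod>s\<in>J-{r}. 1/(w - z s)^2))"
  have feq: "(\<lambda>w. (\<Prod>i\<in>I. w - x i) * (\<Prod>s\<in>J. 1/(w - z s)^2)) = (\<lambda>w. g w / (w - z r) ^ Suc 1)"
  proof
    fix w
    have "(\<Prod>s\<in>J. 1/(w - z s)^2) = 1/(w - z r)^2 * (\<Prod>s\<in>J-{r}. 1/(w - z s)^2)"
      using prod.remove[OF J r, of "\<lambda>s. 1/(w - z s)^2"] by simp
    then show "(\<Prod>i\<in>I. w - x i) * (\<Prod>s\<in>J. 1/(w - z s)^2) = g w / (w - z r) ^ Suc 1"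
      unfolding g_def by (simp add: power2_eq_square)
  qed
  define A where "A = - (z ` (J - {r}))"
  have oA: "open A" unfolding A_def using J by (simp add: open_Compl finite_imp_closed)
  have rA: "z r \<in> A" unfolding A_def using zz by (auto, metis)
  have hA: "g holomorphic_on A" unfolding g_def A_def
    by (intro holomorphic_intros) (auto simp: power2_eq_square)
  have d1: "((\<lambda>w. \<Prod>i\<in>I. w - x i) has_field_derivative
      (\<Prod>i\<in>I. z r - x i) * (\<Sum>i\<in>I. 1 / (z r - x i))) (at (z r))"
  proof -
    have "\<And>i. ((\<lambda>w. w - x i) has_field_derivative 1) (at (z r))"
      by (auto intro!: derivative_eq_intros)
    then show ?thesis
      using DERIV_prod_log[OF I, of "\<lambda>i w. w - x i" "\<lambda>i. 1" "z r"] zx by simp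
  qed
  have d2: "((\<lambda>w. \<Prod>s\<in>J-{r}. 1/(w - z s)^2) has_field_derivative
      (\<Prod>s\<in>J-{r}. 1/(z r - z s)^2) * (\<Sum>s\<in>J-{r}. ((1 / (z r - z s)^2) * (- 2 / (z r - z s))) / (1/(z r - z s)^2))) (at (z r))"
    apply (rule DERIV_prod_log[of "J-{r}" "\<lambda>s w. 1/(w - z s)^2" "\<lambda>s. (1 / (z r - z s)^2) * (- 2 / (z r - z s))" "z r"])
    subgoal using J by simp
    subgoal for i using zz[of i] by (intro inv_sq_deriv) auto
    subgoal for i using zz[of i] by auto
    done
  have sumeq: "(\<Sum>s\<in>J-{r}. ((1 / (z r - z s)^2) * (- 2 / (z r - z s))) / (1/(z r - z s)^2))
      = - (\<Sum>s\<in>J-{r}. 2/(z r - z s))"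
  proof -
    have "(\<Sum>s\<in>J-{r}. ((1 / (z r - z s)^2) * (- 2 / (z r - z s))) / (1/(z r - z s)^2))
       = (\<Sum>s\<in>J-{r}. - (2/(z r - z s)))"
    proof (rule sum.cong)
      fix s assume "s \<in> J - {r}"
      then have "z r - z s \<noteq> 0" using zz by force
      then show "((1 / (z r - z s)^2) * (- 2 / (z r - z s))) / (1/(z r - z s)^2) = - (2/(z r - z s))"
        by (simp add: field_simps)
    qed simp
    then show ?thesis by (simp add: sum_negf)
  qed
  have dg: "(g has_field_derivative (\<Prod>i\<in>I. z r - x i) * (\<Prod>s\<in>J-{r}. 1/(z r - z s)^2)
      * ((\<Sum>i\<in>I. 1/(z r - x i)) - (\<Sum>s\<in>J-{r}. 2/(z r - z s)))) (at (z r))"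
    unfolding g_def using DERIV_mult[OF d1 d2] unfolding sumeq
    by (simp add: algebra_simps)
  have "residue (\<lambda>w. g w / (w - z r) ^ Suc 1) (z r) = (deriv ^^ 1) g (z r) / fact 1"
    by (rule residue_holomorphic_over_power[OF oA rA hA])
  also have "\<dots> = deriv g (z r)" by simp
  also have "\<dots> = (\<Prod>i\<in>I. z r - x i) * (\<Prod>s\<in>J-{r}. 1/(z r - z s)^2)
      * ((\<Sum>i\<in>I. 1/(z r - x i)) - (\<Sum>s\<in>J-{r}. 2/(z r - z s)))"
    by (rule DERIV_imp_deriv[OF dg])
  finally show ?thesis unfolding feq .
qed


lemma pow_bound_simp:
  fixes R :: real
  assumes "R > 0" "N \<ge> 1"
  shows "(2*R)^(2*N-2) * (4/R^2)^N = 4*16^(N-1)/R^2"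
proof -
  obtain m where m: "N = Suc m" using assms(2) by (cases N) auto
  have n2: "2*N-2 = 2*m" unfolding m by simp
  have a1: "(2*R)^(2*N-2) = (4*R^2)^m"
  proof -
    have "(2*R)^(2*N-2) = ((2*R)^2)^m" unfolding n2 by (rule power_mult)
    also have "(2*R)^2 = 4*R^2" by (simp add: power2_eq_square)
    finally show ?thesis .
  qed
  have a2: "(4/R^2)^N = 4/R^2 * (4/R^2)^m" unfolding m by (rule power_Suc)
  have e3: "(4*R^2)^m * (4/R^2)^m = (16::real)^m"
  proof -
    have "(4*R^2)^m * (4/R^2)^m = (4*R^2 * (4/R^2))^m" by (rule power_mult_distrib[symmetric])
    also have "4*R^2 * (4/R^2) = 16" using assms(1) by simp
    finally show ?thesis .
  qed
  have "(2*R)^(2*N-2) * (4/R^2)^N = 4/R^2 * ((4*R^2)^m * (4/R^2)^m)"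
    unfolding a1 a2 by (rule mult.left_commute)
  also have "\<dots> = 4/R^2 * 16^m" unfolding e3 ..
  also have "\<dots> = 4*16^(N-1)/R^2" unfolding m by simp
  finally show ?thesis .
qed

lemma f_bound:
  fixes x z :: "nat \<Rightarrow> complex" and N :: nat and R :: real and w :: complex
  assumes N: "N \<ge> 1" and R: "R \<ge> 2 * (\<Sum>s=1..N. norm (z s)) + (\<Sum>i=1..2*N-2. norm (x i)) + 1"
    and w: "norm w = R"
  shows "norm ((\<Prod>i=1..2*N-2. w - x i) * (\<Prod>s=1..N. 1/(w - z s)^2)) \<le> 4*16^(N-1)/R^2"
proof -
  have Xs: "0 \<le> (\<Sum>i=1..2*N-2. norm (x i))" by (simp add: sum_nonneg)
  have Zs: "0 \<le> (\<Sum>s=1..N. norm (z s))" by (simp add: sum_nonneg)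
  have Rpos: "R > 0" using R Xs Zs by linarith
  have b1: "norm (w - x i) \<le> 2*R" if "i \<in> {1..2*N-2}" for i
  proof -
    have "norm (x i) \<le> (\<Sum>i=1..2*N-2. norm (x i))"
      using that by (intro member_le_sum) auto
    moreover have "norm (w - x i) \<le> norm w + norm (x i)" by (rule norm_triangle_ineq4)
    ultimately show ?thesis using w R Zs by linarith
  qed
  have b2: "norm (1/(w - z s)^2) \<le> 4/R^2" if "s \<in> {1..N}" for s
  proof -
    have "norm (z s) \<le> (\<Sum>s=1..N. norm (z s))"
      using that by (intro member_le_sum) auto
    moreover have "norm w - norm (z s) \<le> norm (w - z s)" by (rule norm_triangle_ineq2)
    ultimately have h: "R/2 \<le> norm (w - z s)" using w R Xs by linarith
    have "(R/2)^2 \<le> norm (w - z s)^2" using h Rpos by (intro power_mono) auto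
    then have "1 / norm (w - z s)^2 \<le> 1/(R/2)^2"
      using Rpos h by (intro divide_left_mono mult_pos_pos zero_less_power) auto
    then show ?thesis by (simp add: norm_divide norm_power power_divide)
  qed
  have p1: "(\<Prod>i=1..2*N-2. norm (w - x i)) \<le> (\<Prod>i=1..2*N-2. 2*R)"
    by (rule prod_mono) (use b1 in auto)
  have p2: "(\<Prod>s=1..N. norm (1/(w - z s)^2)) \<le> (\<Prod>s=1..N. 4/R^2)"
    by (rule prod_mono) (use b2 in auto)
  have p3: "0 \<le> (\<Prod>s=1..N. norm (1/(w - z s)^2))" by (rule prod_nonneg) auto
  have p4: "0 \<le> (\<Prod>i=1..2*N-2. 2*R)" by (rule prod_nonneg) (use Rpos in auto)
  have "norm ((\<Prod>i=1..2*N-2. w - x i) * (\<Prod>s=1..N. 1/(w - z s)^2))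
      = (\<Prod>i=1..2*N-2. norm (w - x i)) * (\<Prod>s=1..N. norm (1/(w - z s)^2))"
    by (simp add: norm_mult prod_norm)
  also have "\<dots> \<le> (\<Prod>i=1..2*N-2. 2*R) * (\<Prod>s=1..N. 4/R^2)"
    by (rule mult_mono[OF p1 p2 p4 p3])
  also have "\<dots> = (2*R)^(2*N-2) * (4/R^2)^N" by simp
  also have "\<dots> = 4*16^(N-1)/R^2" by (rule pow_bound_simp[OF Rpos N])
  finally show ?thesis .
qed

theorem mainTheorem3:
  fixes N :: nat and x z :: "nat \<Rightarrow> complex"
  assumes "N \<ge> 1"
    and "\<And>r s. r \<in> {1..N} \<Longrightarrow> s \<in> {1..N} \<Longrightarrow> r \<noteq> s \<Longrightarrow> z r \<noteq> z s"
    and "\<And>r i. r \<in> {1..N} \<Longrightarrow> i \<in> {1..2*N-2} \<Longrightarrow> z r \<noteq> x i"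
  shows "(\<Sum>r=1..N. (\<Prod>i=1..2*N-2. z r - x i)
            * (\<Prod>s\<in>{1..N}-{r}. 1 / (z r - z s)^2)
            * ((\<Sum>i=1..2*N-2. 1 / (z r - x i)) - (\<Sum>s\<in>{1..N}-{r}. 2 / (z r - z s)))) = 0"
proof -
  define f where "f = (\<lambda>w. (\<Prod>i=1..2*N-2. w - x i) * (\<Prod>s=1..N. 1/(w - z s)^2))"
  define S where "S = (\<Sum>r=1..N. (\<Prod>i=1..2*N-2. z r - x i)
            * (\<Prod>s\<in>{1..N}-{r}. 1 / (z r - z s)^2)
            * ((\<Sum>i=1..2*N-2. 1 / (z r - x i)) - (\<Sum>s\<in>{1..N}-{r}. 2 / (z r - z s))))"
  define pts where "pts = z ` {1..N}"
  define R0 where "R0 = 2 * (\<Sum>s=1..N. norm (z s)) + (\<Sum>i=1..2*N-2. norm (x i)) + 1"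
  define K :: real where "K = 4*16^(N-1)"
  have Xs: "0 \<le> (\<Sum>i=1..2*N-2. norm (x i))" by (simp add: sum_nonneg)
  have Zs: "0 \<le> (\<Sum>s=1..N. norm (z s))" by (simp add: sum_nonneg)
  have R0pos: "R0 \<ge> 1" unfolding R0_def using Xs Zs by linarith
  have Kpos: "K > 0" unfolding K_def by simp
  have res: "residue f (z r) = (\<Prod>i=1..2*N-2. z r - x i)
            * (\<Prod>s\<in>{1..N}-{r}. 1 / (z r - z s)^2)
            * ((\<Sum>i=1..2*N-2. 1 / (z r - x i)) - (\<Sum>s\<in>{1..N}-{r}. 2 / (z r - z s)))"
    if r: "r \<in> {1..N}" for r
    unfolding f_def
    by (rule residue_term) (use r assms(2,3) in auto)
  have inj: "inj_on z {1..N}" using assms(2) unfolding inj_on_def by blast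
  have ptsin: "norm p < R" if pp: "p \<in> pts" and RR: "R \<ge> R0" for p R
  proof -
    obtain s where s: "s \<in> {1..N}" "p = z s" using pp unfolding pts_def by auto
    have "norm (z s) \<le> (\<Sum>s=1..N. norm (z s))" using s by (intro member_le_sum) auto
    then show ?thesis unfolding s(2) using RR Xs Zs unfolding R0_def by linarith
  qed
  have holo: "f holomorphic_on UNIV - pts"
    unfolding f_def pts_def by (intro holomorphic_intros) (auto simp: power2_eq_square)
  have bound: "norm S \<le> K / R" if R: "R \<ge> R0" for R
  proof -
    have Rpos: "R > 0" using R R0pos by linarith
    have pi_sub: "path_image (circlepath 0 R) \<subseteq> UNIV - pts"
      using ptsin[OF _ R] Rpos by (auto simp: sphere_def)
    have "contour_integral (circlepath 0 R) f
        = 2 * pi * \<i> * (\<Sum>p\<in>pts. winding_number (circlepath 0 R) p * residue f p)"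
      by (rule Residue_theorem[OF open_UNIV connected_UNIV _ holo valid_path_circlepath _ pi_sub])
         (auto simp: pts_def)
    also have "(\<Sum>p\<in>pts. winding_number (circlepath 0 R) p * residue f p) = (\<Sum>p\<in>pts. residue f p)"
    proof (rule sum.cong)
      fix p assume "p \<in> pts"
      then have "winding_number (circlepath 0 R) p = 1"
        using ptsin[OF _ R] by (intro winding_number_circlepath) auto
      then show "winding_number (circlepath 0 R) p * residue f p = residue f p" by simp
    qed simp
    also have "(\<Sum>p\<in>pts. residue f p) = (\<Sum>r=1..N. residue f (z r))"
      unfolding pts_def using sum.reindex[OF inj, of "residue f"] by simp
    also have "\<dots> = S" unfolding S_def by (rule sum.cong) (auto simp: res)
    finally have ci: "contour_integral (circlepath 0 R) f = 2 * pi * \<i> * S" .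
    have "continuous_on (path_image (circlepath 0 R)) f"
      using holomorphic_on_imp_continuous_on[OF holo] pi_sub continuous_on_subset by blast
    then have fci: "f contour_integrable_on circlepath 0 R"
      by (rule contour_integrable_continuous_circlepath)
    have hc: "(f has_contour_integral (2 * pi * \<i> * S)) (circlepath 0 R)"
      using has_contour_integral_integral[OF fci] unfolding ci .
    have "norm (2 * pi * \<i> * S) \<le> (K / R^2) * (2*pi*R)"
    proof (rule has_contour_integral_bound_circlepath[OF hc])
      show "0 \<le> K / R^2" using Kpos by simp
      show "0 < R" by (rule Rpos)
      fix w :: complex assume "norm (w - 0) = R"
      then have wR: "norm w = R" by simp
      have R': "R \<ge> 2 * (\<Sum>s=1..N. norm (z s)) + (\<Sum>i=1..2*N-2. norm (x i)) + 1"
        using R unfolding R0_def .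
      show "norm (f w) \<le> K / R^2"
        unfolding f_def K_def by (rule f_bound[OF assms(1) R' wR])
    qed
    then have "2 * pi * norm S \<le> (K / R^2) * (2*pi*R)"
      by (simp add: norm_mult)
    then have "(2 * pi) * norm S \<le> (2 * pi) * ((K / R^2) * R)" by (simp add: algebra_simps)
    moreover have "0 < 2 * pi" by simp
    ultimately have "norm S \<le> (K / R^2) * R" by (rule mult_left_le_imp_le)
    then show ?thesis using Rpos by (simp add: power2_eq_square)
  qed
  have "S = 0"
  proof (rule ccontr)
    assume "S \<noteq> 0"
    then have nS: "norm S > 0" by simp
    define R where "R = max R0 (2 * K / norm S)"
    have R: "R \<ge> R0" "R \<ge> 2 * K / norm S" unfolding R_def by auto
    have Rpos: "R > 0" using R R0pos by linarith
    have "norm S \<le> K / R" by (rule bound[OF R(1)])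
    also have "\<dots> \<le> K / (2 * K / norm S)"
      using R(2) Kpos nS Rpos by (intro divide_left_mono) auto
    also have "\<dots> = norm S / 2" using Kpos by simp
    finally show False using nS by simp
  qed
  then show ?thesis unfolding S_def .
qed

end
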